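(* Let $p\ge5$ be a prime. Then $H^1(\mathrm{Sym}(p),X_{\{2\}})=0$, and $H^1(\mathrm{Sym}(p),D_{\{q\}})=0$ for every odd prime $q$.
   Context: $\mathrm{Sym}(p)$ is identified with the group of $p\times p$ permutation matrices (via $\alpha\mapsto[\delta_{i\alpha,j}]_{i,j}$) and acts by conjugation on the group $\mathrm{D}(p,\mathbb{C})$ of invertible diagonal matrices. $D$ is the torsion subgroup of $\mathrm{D}(p,\mathbb{C})$ and $D_{\{q\}}$ its subgroup of elements of $q$-power order; $X=\mathrm{SL}(p,\mathbb{C})\cap\mathrm{D}(p,\mathbb{C})$ and $X_{\{2\}}$ is its subgroup of elements of $2$-power order. These are regarded as $\mathrm{Sym}(p)$-modules. *)

theory Defs
  imports Complex_Main "HOL-Combinatorics.Permutations" "HOL-Computational_Algebra.Primes"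
begin

text \<open>An invertible diagonal p x p complex matrix is represented by its diagonal,
  a function d :: nat => complex with d i nonzero for i < p, normalised
  by d i = 1 for i >= p.  Multiplication of diagonal matrices is pointwise.\<close>

definition diag_group :: "nat \<Rightarrow> (nat \<Rightarrow> complex) set" where
  "diag_group p = {d. (\<forall>i<p. d i \<noteq> 0) \<and> (\<forall>i\<ge>p. d i = 1)}"

definition diag_torsion :: "nat \<Rightarrow> (nat \<Rightarrow> complex) set" where
  "diag_torsion p = {d \<in> diag_group p. \<exists>n>0. \<forall>i<p. d i ^ n = 1}"

definition diag_SL :: "nat \<Rightarrow> (nat \<Rightarrow> complex) set" where
  "diag_SL p = {d \<in> diag_group p. (\<Prod>i<p. d i) = 1}"

definition pow_part :: "nat \<Rightarrow> (nat \<Rightarrow> complex) set \<Rightarrow> nat \<Rightarrow> (nat \<Rightarrow> complex) set" where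
  "pow_part p M q = {d \<in> M. \<exists>k. \<forall>i<p. d i ^ (q ^ k) = 1}"

text \<open>Conjugation action: with permutation matrix P_a = [delta_{a(i), j}],
  P_a d P_a^{-1} has diagonal i |-> d (a i).  With the paper's convention of
  right-written permutations (i a b = (i a) b), the product a b in Sym(p) is
  b o a, and a |-> P_a is a homomorphism; conjugation is a left action.\<close>
definition sym_act :: "(nat \<Rightarrow> nat) \<Rightarrow> (nat \<Rightarrow> complex) \<Rightarrow> (nat \<Rightarrow> complex)" where
  "sym_act a d = (\<lambda>i. d (a i))"

definition cocycles :: "nat \<Rightarrow> (nat \<Rightarrow> complex) set \<Rightarrow> ((nat \<Rightarrow> nat) \<Rightarrow> (nat \<Rightarrow> complex)) set" where
  "cocycles p M = {f. (\<forall>a. a permutes {..<p} \<longrightarrow> f a \<in> M) \<and>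
      (\<forall>a b. a permutes {..<p} \<longrightarrow> b permutes {..<p} \<longrightarrow>
         f (b \<circ> a) = (\<lambda>i. f a i * sym_act a (f b) i))}"

definition is_coboundary :: "nat \<Rightarrow> (nat \<Rightarrow> complex) set \<Rightarrow> ((nat \<Rightarrow> nat) \<Rightarrow> (nat \<Rightarrow> complex)) \<Rightarrow> bool" where
  "is_coboundary p M f \<longleftrightarrow> (\<exists>m\<in>M. \<forall>a. a permutes {..<p} \<longrightarrow>
      f a = (\<lambda>i. sym_act a m i / m i))"

definition H1_vanishes :: "nat \<Rightarrow> (nat \<Rightarrow> complex) set \<Rightarrow> bool" where
  "H1_vanishes p M \<longleftrightarrow> (\<forall>f\<in>cocycles p M. is_coboundary p M f)"

end

theory Submission
  imports Defs "HOL-Number_Theory.Cong"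
begin


lemma coc_id:
  fixes p :: nat
  assumes coc: "\<And>a b i. a permutes {..<p} \<Longrightarrow> b permutes {..<p} \<Longrightarrow> f (b \<circ> a) i = f a i * f b (a i)"
    and nz: "\<And>a i. a permutes {..<p} \<Longrightarrow> i<p \<Longrightarrow> f a i \<noteq> (0::complex)"
    and i: "i < p"
  shows "f id i = 1"
proof -
  have "f (id \<circ> id) i = f id i * f id i" using coc[of id id i] by (simp add: permutes_id)
  then have "f id i * f id i = f id i * 1" by simp
  then show ?thesis using nz[OF permutes_id i] by (metis mult_left_cancel)
qed

lemma coc_main:
  fixes p :: nat
  assumes coc: "\<And>a b i. a permutes {..<p} \<Longrightarrow> b permutes {..<p} \<Longrightarrow> f (b \<circ> a) i = f a i * f b (a i)"
    and nz: "\<And>a i. a permutes {..<p} \<Longrightarrow> i<p \<Longrightarrow> f a i \<noteq> (0::complex)"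
    and p: "0 < p"
    and tr: "\<And>x y. 0<x \<Longrightarrow> 0<y \<Longrightarrow> x<p \<Longrightarrow> y<p \<Longrightarrow> x\<noteq>y \<Longrightarrow> f (transpose x y) 0 = 1"
    and a: "a permutes {..<p}" and i: "i < p"
  shows "f a i = f (transpose 0 (a i)) 0 / f (transpose 0 i) 0"
proof -
  have stab: "f s 0 = 1" if "s permutes {..<p}" "s 0 = 0" for s
  proof -
    have s1: "s permutes {1..<p}"
    proof (rule permutes_superset[OF that(1)])
      fix x :: nat assume "x \<in> {..<p} - {1..<p}"
      then have "x = 0" by auto
      then show "s x = x" using that(2) by simp
    qed
    have "finite {1..<p::nat}" by simp
    from s1 this show ?thesis
    proof (induction s rule: permutes_induct)
      case id
      then show ?case using coc_id[of p f, OF coc nz p] by blast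
    next
      case (swap x y s)
      have sp: "s permutes {..<p}" using swap.hyps(4) by (rule permutes_subset) auto
      have tp: "transpose x y permutes {..<p}" using swap.hyps by (intro permutes_swap_id) auto
      have s0: "s 0 = 0" using permutes_not_in[OF swap.hyps(4)] by simp
      have e: "f (transpose x y \<circ> s) 0 = f s 0 * f (transpose x y) (s 0)" by (rule coc[OF sp tp])
      have "f s 0 * f (transpose x y) (s 0) = 1" using s0 swap.IH tr[of x y] swap.hyps by simp
      with e show ?case by (rule trans)
    qed
  qed
  define u where "u = transpose 0 (a i)"
  define v where "v = transpose 0 i"
  have ai: "a i < p" using permutes_in_image[OF a] i by simp
  have up: "u permutes {..<p}" unfolding u_def using ai p by (intro permutes_swap_id) auto
  have vp: "v permutes {..<p}" unfolding v_def using i p by (intro permutes_swap_id) auto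
  define s where "s = u \<circ> a \<circ> v"
  have sp: "s permutes {..<p}" unfolding s_def by (intro permutes_compose up vp a)
  have s0: "s 0 = 0" unfolding s_def u_def v_def by simp
  have us: "u \<circ> s = a \<circ> v" unfolding s_def u_def by (simp add: fun_eq_iff)
  have "f (a \<circ> v) 0 = f v 0 * f a i" using coc[OF vp a, of 0] by (simp add: v_def)
  moreover have "f (u \<circ> s) 0 = f u 0" using coc[OF sp up, of 0] s0 stab[OF sp s0] by simp
  ultimately have "f v 0 * f a i = f u 0" using us by simp
  moreover have "f v 0 \<noteq> 0" using nz[OF vp p] .
  ultimately show ?thesis unfolding u_def v_def by (simp add: field_simps)
qed

lemma odd_root_one:
  fixes w :: complex
  assumes "w^2 = 1" "w^n = 1" "odd n"
  shows "w = 1"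
proof -
  obtain k where n: "n = 2*k+1" using assms(3) oddE by blast
  have "w^n = (w^2)^k * w" unfolding n by (simp add: power_mult power_add)
  then show ?thesis using assms by simp
qed

lemma root_pow_mono:
  fixes z :: complex
  assumes "z^(q^k) = 1" "k \<le> K"
  shows "z^(q^K) = 1"
proof -
  have "q^K = q^k * q^(K-k)" using assms(2) by (simp add: power_add[symmetric])
  then show ?thesis using assms(1) by (simp add: power_mult)
qed

lemma exp_bound:
  fixes g :: "nat \<Rightarrow> complex"
  assumes "\<And>j. j < p \<Longrightarrow> \<exists>k. g j ^ (q^k) = 1"
  shows "\<exists>K. \<forall>j<p. g j ^ (q^K) = 1"
proof -
  define k where "k j = (SOME k. g j ^ (q^k) = 1)" for j
  have hk: "g j ^ (q^(k j)) = 1" if "j < p" for j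
    unfolding k_def using someI_ex[OF assms[OF that]] .
  define K where "K = Max (k ` {..<p})"
  have "k j \<le> K" if "j < p" for j unfolding K_def using that by (intro Max_ge) auto
  then show ?thesis using hk root_pow_mono by blast
qed

lemma coc_from:
  assumes "f \<in> cocycles p M" "a permutes {..<p}" "b permutes {..<p}"
  shows "f (b \<circ> a) i = f a i * f b (a i)"
  using assms unfolding cocycles_def sym_act_def by (auto dest: fun_cong)

lemma transp_sq:
  fixes p :: nat
  assumes coc: "\<And>a b i. a permutes {..<p} \<Longrightarrow> b permutes {..<p} \<Longrightarrow> f (b \<circ> a) i = f a i * f b (a i)"
    and nz: "\<And>a i. a permutes {..<p} \<Longrightarrow> i<p \<Longrightarrow> f a i \<noteq> (0::complex)"
    and xy: "x < p" "y < p"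
    and z: "z < p"
  shows "f (transpose x y) z * f (transpose x y) (transpose x y z) = 1"
proof -
  have tp: "transpose x y permutes {..<p}" using xy by (intro permutes_swap_id) auto
  have "f (transpose x y \<circ> transpose x y) z = f (transpose x y) z * f (transpose x y) (transpose x y z)"
    using coc[OF tp tp] .
  then show ?thesis using coc_id[of p f, OF coc nz z] by simp
qed

theorem lemma7p3:
  fixes p :: nat
  assumes "prime p" and "p \<ge> 5"
  shows "H1_vanishes p (pow_part p (diag_SL p) 2) \<and>
         (\<forall>q::nat. prime q \<and> odd q \<longrightarrow> H1_vanishes p (pow_part p (diag_torsion p) q))"
proof
  have p0: "0 < p" using assms by simp
  have podd: "odd p" using assms prime_odd_nat by fastforce
  show "H1_vanishes p (pow_part p (diag_SL p) 2)"
    unfolding H1_vanishes_def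
  proof
    fix f assume f: "f \<in> cocycles p (pow_part p (diag_SL p) 2)"
    have fM: "f a \<in> pow_part p (diag_SL p) 2" if "a permutes {..<p}" for a
      using f that unfolding cocycles_def by auto
    have nz: "f a i \<noteq> 0" if "a permutes {..<p}" "i < p" for a i
      using fM[OF that(1)] that(2) unfolding pow_part_def diag_SL_def diag_group_def by auto
    have one: "f a i = 1" if "a permutes {..<p}" "\<not> i < p" for a i
      using fM[OF that(1)] that(2) unfolding pow_part_def diag_SL_def diag_group_def by auto
    have prod: "(\<Prod>i<p. f a i) = 1" if "a permutes {..<p}" for a
      using fM[OF that(1)] unfolding pow_part_def diag_SL_def by auto
    have pw: "\<exists>k. \<forall>i<p. f a i ^ (2^k) = 1" if "a permutes {..<p}" for a
      using fM[OF that(1)] unfolding pow_part_def by auto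
    have coc: "\<And>a b i. a permutes {..<p} \<Longrightarrow> b permutes {..<p} \<Longrightarrow> f (b \<circ> a) i = f a i * f b (a i)"
      using coc_from[OF f] by blast
    have tr: "f (transpose x y) 0 = 1" if xy: "0<x" "0<y" "x<p" "y<p" "x\<noteq>y" for x y
    proof -
      define t where "t = transpose x y"
      define w where "w = f t 0"
      have tp: "t permutes {..<p}" unfolding t_def using xy by (intro permutes_swap_id) auto
      have w2: "w^2 = 1" using transp_sq[of p f, OF coc nz xy(3,4) p0] xy unfolding w_def t_def
        by (simp add: power2_eq_square)
      have wz: "f t z = w" if z: "z < p" "z \<noteq> x" "z \<noteq> y" for z
      proof (cases "z = 0")
        case True then show ?thesis unfolding w_def by simp
      next
        case False
        define c where "c = transpose 0 z"
        have cp: "c permutes {..<p}" unfolding c_def using z p0 by (intro permutes_swap_id) auto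
        have ctc: "c \<circ> (t \<circ> c) = t" unfolding c_def t_def using z xy False
          by (auto simp: fun_eq_iff transpose_def)
        have "f (c \<circ> (t \<circ> c)) 0 = f (t \<circ> c) 0 * f c (t (c 0))"
          using coc[OF permutes_compose[OF cp tp] cp] by simp
        also have "\<dots> = f c 0 * f t z * f c z"
          using coc[OF cp tp, of 0] z False unfolding c_def t_def by simp
        finally have e1: "w = f c 0 * f t z * f c z" using ctc unfolding w_def by simp
        have "f c 0 * f c z = 1" using transp_sq[of p f, OF coc nz p0 z(1) p0] unfolding c_def by simp
        with e1 show ?thesis by (simp add: algebra_simps)
      qed
      have xy1: "f t x * f t y = 1" using transp_sq[of p f, OF coc nz xy(3,4) xy(3)] unfolding t_def by simp
      have dec: "{..<p} = insert x (insert y ({..<p} - {x, y}))" using xy by auto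
      have "(\<Prod>i<p. f t i) = f t x * (f t y * (\<Prod>i\<in>{..<p} - {x, y}. f t i))"
        by (subst dec) (simp add: prod.insert_remove xy)
      also have "(\<Prod>i\<in>{..<p} - {x, y}. f t i) = (\<Prod>i\<in>{..<p} - {x, y}. w)"
        by (rule prod.cong) (auto intro: wz)
      also have "\<dots> = w ^ (p - 2)" using xy by (simp add: card_Diff_subset numeral_2_eq_2)
      finally have "f t x * (f t y * w ^ (p - 2)) = 1" using prod[OF tp] by simp
      then have "(f t x * f t y) * w ^ (p - 2) = 1" by (simp add: mult.assoc)
      then have "w ^ (p - 2) = 1" using xy1 by simp
      moreover have "odd (p - 2)" using podd assms(2) by simp
      ultimately show ?thesis using odd_root_one[OF w2] unfolding w_def t_def by blast
    qed
    define m where "m j = f (transpose 0 j) 0" for j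
    have tjp: "transpose 0 j permutes {..<p}" if "j < p" for j using that p0 by (intro permutes_swap_id) auto
    have mnz: "m j \<noteq> 0" if "j < p" for j unfolding m_def using nz[OF tjp[OF that] p0] .
    obtain K where K: "\<forall>j<p. m j ^ (2^K) = 1"
      using exp_bound[of p m 2] pw tjp p0 unfolding m_def by blast
    have main: "f a i = m (a i) / m i" if "a permutes {..<p}" "i < p" for a i
      unfolding m_def using coc_main[of p f, OF coc nz p0 tr that] by blast
    define P where "P = (\<Prod>j<p. m j)"
    have PK: "P ^ (2^K) = 1" unfolding P_def prod_power_distrib using K by (auto intro!: prod.neutral)
    have Pnz: "P \<noteq> 0" unfolding P_def using mnz by simp
    have "coprime p (2^K)" using podd by simp
    then obtain r where r: "[p * r = Suc 0] (mod 2^K)" using cong_solve_coprime_nat by blast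
    define c where "c = inverse P ^ r"
    have modpow: "z ^ n = z ^ (n mod 2^K)" if "z ^ (2^K) = 1" for z :: complex and n
    proof -
      have "z ^ n = z ^ (n mod 2^K) * (z ^ (2^K)) ^ (n div 2^K)"
        by (metis mod_mult_div_eq power_add power_mult)
      then show ?thesis using that by simp
    qed
    have iPK: "inverse P ^ (2^K) = 1" using PK by (simp add: power_inverse)
    have cp: "c ^ p = inverse P"
    proof -
      have "c ^ p = inverse P ^ (p * r)" unfolding c_def by (simp add: power_mult[symmetric] mult.commute)
      also have "\<dots> = inverse P ^ ((p * r) mod 2^K)" using modpow[OF iPK] .
      also have "\<dots> = inverse P ^ (Suc 0 mod 2^K)" using r unfolding cong_def by simp
      also have "\<dots> = inverse P" using modpow[OF iPK, of "Suc 0"] by simp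
      finally show ?thesis .
    qed
    have cK: "c ^ (2^K) = 1" unfolding c_def by (metis iPK power_mult mult.commute power_one)
    have cnz: "c \<noteq> 0" unfolding c_def using Pnz by simp
    define m' where "m' j = (if j < p then c * m j else 1)" for j
    have m'M: "m' \<in> pow_part p (diag_SL p) 2"
    proof -
      have "(\<Prod>i<p. m' i) = c ^ p * P" unfolding m'_def P_def by (simp add: prod.distrib)
      also have "\<dots> = 1" using cp Pnz by simp
      finally have "(\<Prod>i<p. m' i) = 1" .
      moreover have "\<forall>i<p. m' i ^ (2^K) = 1" unfolding m'_def using K cK by (simp add: power_mult_distrib)
      ultimately show ?thesis unfolding pow_part_def diag_SL_def diag_group_def m'_def
        using mnz cnz by auto
    qed
    show "is_coboundary p (pow_part p (diag_SL p) 2) f"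
      unfolding is_coboundary_def
    proof (intro bexI[OF _ m'M] allI impI)
      fix a assume a: "a permutes {..<p}"
      show "f a = (\<lambda>i. sym_act a m' i / m' i)"
      proof
        fix i show "f a i = sym_act a m' i / m' i"
        proof (cases "i < p")
          case True
          have "a i < p" using permutes_in_image[OF a] True by simp
          then show ?thesis using main[OF a True] True cnz unfolding sym_act_def m'_def by simp
        next
          case False
          then show ?thesis using one[OF a False] permutes_not_in[OF a] unfolding sym_act_def m'_def by simp
        qed
      qed
    qed
  qed
  show "\<forall>q::nat. prime q \<and> odd q \<longrightarrow> H1_vanishes p (pow_part p (diag_torsion p) q)"
  proof (intro allI impI)
    fix q :: nat assume q: "prime q \<and> odd q"
    show "H1_vanishes p (pow_part p (diag_torsion p) q)"
      unfolding H1_vanishes_def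
    proof
      fix f assume f: "f \<in> cocycles p (pow_part p (diag_torsion p) q)"
      have fM: "f a \<in> pow_part p (diag_torsion p) q" if "a permutes {..<p}" for a
        using f that unfolding cocycles_def by auto
      have nz: "f a i \<noteq> 0" if "a permutes {..<p}" "i < p" for a i
        using fM[OF that(1)] that(2) unfolding pow_part_def diag_torsion_def diag_group_def by auto
      have one: "f a i = 1" if "a permutes {..<p}" "\<not> i < p" for a i
        using fM[OF that(1)] that(2) unfolding pow_part_def diag_torsion_def diag_group_def by auto
      have pw: "\<exists>k. \<forall>i<p. f a i ^ (q^k) = 1" if "a permutes {..<p}" for a
        using fM[OF that(1)] unfolding pow_part_def by auto
      have coc: "\<And>a b i. a permutes {..<p} \<Longrightarrow> b permutes {..<p} \<Longrightarrow> f (b \<circ> a) i = f a i * f b (a i)"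
        using coc_from[OF f] by blast
      have tr: "f (transpose x y) 0 = 1" if xy: "0<x" "0<y" "x<p" "y<p" "x\<noteq>y" for x y
      proof -
        have tp: "transpose x y permutes {..<p}" using xy by (intro permutes_swap_id) auto
        have w2: "(f (transpose x y) 0)^2 = 1" using transp_sq[of p f, OF coc nz xy(3,4) p0] xy
          by (simp add: power2_eq_square)
        obtain k where "\<forall>i<p. f (transpose x y) i ^ (q^k) = 1" using pw[OF tp] by blast
        then have "f (transpose x y) 0 ^ (q^k) = 1" using p0 by blast
        moreover have "odd (q^k)" using q by simp
        ultimately show ?thesis using odd_root_one[OF w2] by blast
      qed
      define m where "m j = (if j < p then f (transpose 0 j) 0 else 1)" for j
      have tjp: "transpose 0 j permutes {..<p}" if "j < p" for j using that p0 by (intro permutes_swap_id) auto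
      have mnz: "m j \<noteq> 0" if "j < p" for j unfolding m_def using nz[OF tjp[OF that] p0] that by simp
      obtain K where K: "\<forall>j<p. m j ^ (q^K) = 1"
        using exp_bound[of p m q] pw tjp p0 unfolding m_def by fastforce
      have main: "f a i = m (a i) / m i" if "a permutes {..<p}" "i < p" for a i
      proof -
        have "a i < p" using permutes_in_image[OF that(1)] that(2) by simp
        then show ?thesis unfolding m_def using coc_main[of p f, OF coc nz p0 tr that] that by simp
      qed
      have mM: "m \<in> pow_part p (diag_torsion p) q"
      proof -
        have qK: "q^K > 0" using q prime_gt_0_nat by simp
        have ex: "\<exists>n>0. \<forall>i<p. m i ^ n = 1" using qK K by blast
        show ?thesis unfolding pow_part_def diag_torsion_def diag_group_def
          using mnz K ex by (auto simp: m_def)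
      qed
      show "is_coboundary p (pow_part p (diag_torsion p) q) f"
        unfolding is_coboundary_def
      proof (intro bexI[OF _ mM] allI impI)
        fix a assume a: "a permutes {..<p}"
        show "f a = (\<lambda>i. sym_act a m i / m i)"
        proof
          fix i show "f a i = sym_act a m i / m i"
          proof (cases "i < p")
            case True
            then show ?thesis using main[OF a True] unfolding sym_act_def by simp
          next
            case False
            then show ?thesis using one[OF a False] permutes_not_in[OF a] unfolding sym_act_def m_def by simp
          qed
        qed
      qed
    qed
  qed
qed

end
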